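(* Let $h:\mathbb{R}\to\mathbb{R}$ be of class $C^1$, let $x_0\in\mathbb{R}$ and let $]x_-,x_+[$ be an interval containing $x_0$. Let $u_1,u_2$ be two linearly independent real solutions of $u''(x)+h(x)u(x)=0$ such that, for all $x\in]x_-,x_+[$, $u_1(x)\neq0$, $u_2(x)\neq0$ and $\dfrac{u'_1(x)u'_2(x)}{u_1(x)u_2(x)}<0$. Then \[ \Phi(x)=\sqrt{-\frac{u'_1(x)u'_2(x)}{u_1(x)u_2(x)}} \] is a solution on $]x_-,x_+[$ of \[ \Phi''(x)=\frac{3\Phi^{2}(x)+h(x)}{\Phi^{2}(x)-h(x)}\frac{\left[\Phi'(x)\right]^{2}}{\Phi(x)}-\frac{h'(x)\Phi'(x)}{\Phi^{2}(x)-h(x)}+\frac{\Phi^{4}(x)-h^{2}(x)}{\Phi(x)}, \] and, with $u_{\mathtt{top}},u_{\mathtt{bot}}$ built from this $\Phi$ as in the context, either $u_1(x)=u_1(x_0)u_{\mathtt{top}}(x)$ and $u_2(x)=u_2(x_0)u_{\mathtt{bot}}(x)$, or $u_1(x)=u_1(x_0)u_{\mathtt{bot}}(x)$ and $u_2(x)=u_2(x_0)u_{\mathtt{top}}(x)$.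
   Context: For a function $\Phi$ on $]x_-,x_+[$, \[ u_{\mathtt{top}}(x)=\exp\left[\int_{x_0}^{x}d\xi\,\Phi(\xi)\frac{\Phi'(\xi)-\sqrt{\left[h(\xi)-\Phi^{2}(\xi)\right]^{2}+\left[\Phi'(\xi)\right]^{2}}}{h(\xi)-\Phi^{2}(\xi)}\right],\quad u_{\mathtt{bot}}(x)=\exp\left[\int_{x_0}^{x}d\xi\,\Phi(\xi)\frac{\Phi'(\xi)+\sqrt{\left[h(\xi)-\Phi^{2}(\xi)\right]^{2}+\left[\Phi'(\xi)\right]^{2}}}{h(\xi)-\Phi^{2}(\xi)}\right]. \] The ODE for $\Phi$ is the geodesic equation in explicit form for the metric $g_h=\left[(h(x)-\varPhi^2)^2dx^2+d\varPhi^2\right]/\varPhi^2$ on $\{\varPhi>0,\ \varPhi^2\neq h(x)\}$.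
   Formalization: $\Phi^{2}(x)$ is also assumed to differ from $h(x)$ for every x in $]x_-,x_+[$, and one of the two alternatives for $u_1,u_2$ holds on the whole interval rather than pointwise. Apart from conventions, each condition added here is assumed in the paper as well or is needed for the statement above to hold. *)

theory Defs
  imports "HOL-Analysis.Analysis"
begin

text \<open>Oriented integral from x0 to x: interval Lebesgue integral (negated when x < x0).\<close>

definition u_top :: "(real \<Rightarrow> real) \<Rightarrow> (real \<Rightarrow> real) \<Rightarrow> real \<Rightarrow> real \<Rightarrow> real" where
  "u_top h \<Phi> x0 x = exp (LBINT \<xi>=ereal x0..ereal x.
     \<Phi> \<xi> * (deriv \<Phi> \<xi> - sqrt ((h \<xi> - (\<Phi> \<xi>)\<^sup>2)\<^sup>2 + (deriv \<Phi> \<xi>)\<^sup>2)) / (h \<xi> - (\<Phi> \<xi>)\<^sup>2))"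

definition u_bot :: "(real \<Rightarrow> real) \<Rightarrow> (real \<Rightarrow> real) \<Rightarrow> real \<Rightarrow> real \<Rightarrow> real" where
  "u_bot h \<Phi> x0 x = exp (LBINT \<xi>=ereal x0..ereal x.
     \<Phi> \<xi> * (deriv \<Phi> \<xi> + sqrt ((h \<xi> - (\<Phi> \<xi>)\<^sup>2)\<^sup>2 + (deriv \<Phi> \<xi>)\<^sup>2)) / (h \<xi> - (\<Phi> \<xi>)\<^sup>2))"

end

theory Submission
  imports Defs
begin

lemma interval_sub:
  fixes I :: "real set"
  assumes "is_interval I" "x \<in> I" "y \<in> I"
  shows "{min x y..max x y} \<subseteq> I"
  using assms unfolding is_interval_1
  by (metis atLeastAtMost_iff min_def max_def subsetI)

lemma sign_const:
  fixes f :: "real \<Rightarrow> real"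
  assumes I: "is_interval I" and c: "continuous_on I f" and nz: "\<And>x. x \<in> I \<Longrightarrow> f x \<noteq> 0"
  shows "(\<forall>x\<in>I. f x > 0) \<or> (\<forall>x\<in>I. f x < 0)"
proof (rule ccontr)
  assume "\<not> ?thesis"
  then obtain x y where xy: "x \<in> I" "y \<in> I" "f x > 0" "f y < 0"
    using nz by (metis linorder_neqE_linordered_idom)
  have sub: "{min x y..max x y} \<subseteq> I" by (rule interval_sub[OF I xy(1,2)])
  obtain z where z: "min x y \<le> z" "z \<le> max x y" "f z = 0"
  proof (cases "x \<le> y")
    case True
    then have "continuous_on {x..y} f" using sub c continuous_on_subset by (simp add: min_def max_def)
    from IVT2'[of f y 0 x, OF _ _ True this] xy True that show ?thesis by (auto simp: min_def max_def)
  next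
    case False
    then have "continuous_on {y..x} f" using sub c continuous_on_subset by (simp add: min_def max_def)
    from IVT'[of f y 0 x, OF _ _ _ this] xy False that show ?thesis by (auto simp: min_def max_def)
  qed
  then have "z \<in> I" using sub by auto
  with z nz show False by auto
qed

lemma FTC_I:
  fixes f g F :: "real \<Rightarrow> real"
  assumes I: "is_interval I" and x0: "x0 \<in> I" and x: "x \<in> I"
    and c: "continuous_on I g" and fg: "\<And>y. y \<in> I \<Longrightarrow> f y = g y"
    and d: "\<And>y. y \<in> I \<Longrightarrow> (F has_real_derivative g y) (at y)"
  shows "(LBINT \<xi>=ereal x0..ereal x. f \<xi>) = F x - F x0"
proof -
  have sub: "{min x0 x..max x0 x} \<subseteq> I" by (rule interval_sub[OF I x0 x])
  show ?thesis
  proof (rule interval_integral_FTC_finite)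
    have "continuous_on {min x0 x..max x0 x} g" using c sub continuous_on_subset by blast
    moreover have "\<forall>y\<in>{min x0 x..max x0 x}. g y = f y" using fg sub by auto
    ultimately show "continuous_on {min x0 x..max x0 x} f" using continuous_on_eq by blast
  next
    fix y assume "min x0 x \<le> y" "y \<le> max x0 x"
    then have y: "y \<in> I" using sub by auto
    show "(F has_vector_derivative f y) (at y within {min x0 x..max x0 x})"
      using d[OF y] fg[OF y] has_real_derivative_iff_has_vector_derivative has_field_derivative_at_within
      by metis
  qed
qed

lemma u_rep:
  fixes u u' f :: "real \<Rightarrow> real"
  assumes I: "is_interval I" and x0: "x0 \<in> I" and x: "x \<in> I"
    and nz: "\<And>y. y \<in> I \<Longrightarrow> u y \<noteq> 0"
    and ud: "\<And>y. (u has_real_derivative u' y) (at y)"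
    and uc: "continuous_on UNIV u'"
    and fu: "\<And>y. y \<in> I \<Longrightarrow> f y = u' y / u y"
  shows "u x = u x0 * exp (LBINT \<xi>=ereal x0..ereal x. f \<xi>)"
proof -
  define g where "g = (\<lambda>y. u y / u x0)"
  have ucont: "continuous_on I u"
    using ud by (meson DERIV_continuous continuous_at_imp_continuous_on)
  have gpos: "g y > 0" if y: "y \<in> I" for y
  proof -
    from sign_const[OF I ucont nz] have "(\<forall>x\<in>I. u x > 0) \<or> (\<forall>x\<in>I. u x < 0)" .
    then show ?thesis using x0 y unfolding g_def by (auto simp: divide_pos_pos divide_neg_neg)
  qed
  have cg: "continuous_on I (\<lambda>y. u' y / u y)"
    using ucont uc nz by (auto intro!: continuous_intros intro: continuous_on_subset)
  have dg: "((\<lambda>y. ln (g y)) has_real_derivative u' y / u y) (at y)" if y: "y \<in> I" for y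
  proof -
    have "(g has_real_derivative u' y / u x0) (at y)" unfolding g_def
      using DERIV_cdivide[OF ud[of y], of "u x0"] by simp
    from DERIV_chain2[OF DERIV_ln[OF gpos[OF y]] this]
    show ?thesis using nz[OF y] nz[OF x0] unfolding g_def by (simp add: field_simps)
  qed
  have "(LBINT \<xi>=ereal x0..ereal x. f \<xi>) = ln (g x) - ln (g x0)"
    by (rule FTC_I[OF I x0 x cg fu dg])
  also have "\<dots> = ln (g x)" using nz[OF x0] by (simp add: g_def)
  finally show ?thesis using gpos[OF x] nz[OF x0] by (simp add: g_def)
qed

lemma top_bot_alg:
  fixes a b h P dP :: real
  assumes P: "P > 0" "P^2 = -(a*b)" and D: "h - P^2 \<noteq> 0"
    and dP: "dP = (a + b)*(h + a*b)/(2*P)"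
  shows "sqrt ((h - P^2)^2 + dP^2) = \<bar>(h - P^2)*(a - b)\<bar>/(2*P)"
proof -
  have hh: "h + a*b = h - P^2" using P by simp
  have "(h - P^2)^2 + dP^2 = ((h - P^2)*(a - b)/(2*P))^2"
    unfolding dP hh using P apply (simp add: field_simps power2_eq_square) by algebra
  then show ?thesis using P by (simp add: abs_div)
qed
lemma ode_alg0:
  fixes sv h hp P :: real
  assumes P: "P > 0" and D: "P^2 - h \<noteq> 0"
  shows "((-2*h - sv^2 - 2*P^2)*(h - P^2) + sv * (hp - h * sv + P^2* sv))/(2*P) - (sv * (h-P^2))*((sv * (h-P^2))/(2*P))/(2*P*P)
    = (3 * P\<^sup>2 + h) / (P\<^sup>2 - h) * ((sv * (h-P^2))/(2*P))\<^sup>2 / P - hp * ((sv * (h-P^2))/(2*P)) / (P\<^sup>2 - h) + (P ^ 4 - h\<^sup>2) / P"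
proof -
  have "P \<noteq> 0" using P by simp
  then show ?thesis using D
    by (simp add: divide_simps power2_eq_square) (simp add: algebra_simps power2_eq_square power4_eq_xxxx)
qed
lemma ode_alg:
  fixes a b h hp P :: real
  assumes P: "P > 0" "P^2 = -(a*b)" and D: "P^2 \<noteq> h"
  defines "N \<equiv> (a+b)*(h+a*b)"
  defines "dP \<equiv> N/(2*P)"
  defines "Np \<equiv> ((-h-a^2)+(-h-b^2))*(h+a*b)+(a+b)*(hp+(-h-a^2)*b+a*(-h-b^2))"
  shows "Np/(2*P) - N*dP/(2*P*P) = (3 * P\<^sup>2 + h) / (P\<^sup>2 - h) * dP\<^sup>2 / P - hp * dP / (P\<^sup>2 - h) + (P ^ 4 - h\<^sup>2) / P"
proof -
  have D': "P^2 - h \<noteq> 0" using D by simp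
  have e1: "N = (a+b)*(h-P^2)" unfolding N_def using P by simp
  have e2: "Np = (-2*h - (a+b)^2 - 2*P^2)*(h - P^2) + (a+b)*(hp - h*(a+b) + P^2*(a+b))"
    unfolding Np_def using P(2) by (simp add: algebra_simps power2_eq_square)
  show ?thesis unfolding dP_def e1 e2 using ode_alg0[OF P(1) D'] by simp
qed

lemma sqrt_deriv:
  fixes a b h :: "real \<Rightarrow> real"
  assumes ad: "(a has_real_derivative (- h x - (a x)^2)) (at x)"
   and bd: "(b has_real_derivative (- h x - (b x)^2)) (at x)" and ab: "a x * b x < 0"
  shows "((\<lambda>x. sqrt (- (a x * b x))) has_real_derivative (a x + b x) * (h x + a x * b x) / (2 * sqrt (- (a x * b x)))) (at x)"
proof -
    have q: "((\<lambda>x. - (a x * b x)) has_real_derivative (a x + b x) * (h x + a x * b x)) (at x)"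
      apply (rule DERIV_cong[OF DERIV_minus[OF DERIV_mult[OF ad bd]]])
      by (simp add: algebra_simps power2_eq_square)
    have "0 < - (a x * b x)" using ab by simp
    from DERIV_chain2[OF DERIV_real_sqrt[OF this] q]
    show ?thesis by (rule DERIV_cong) (simp add: field_simps)
qed
lemma N_deriv:
  fixes a b h h' \<Phi> d\<Phi> :: "real \<Rightarrow> real"
  assumes ad: "(a has_real_derivative (- h x - (a x)^2)) (at x)"
   and bd: "(b has_real_derivative (- h x - (b x)^2)) (at x)"
   and h_diff: "\<And>x. (h has_real_derivative h' x) (at x)"
  shows "((\<lambda>x. (a x + b x) * (h x + a x * b x)) has_real_derivative
        ((- h x - (a x)^2) + (- h x - (b x)^2)) * (h x + a x * b x)
      + (a x + b x) * (h' x + (- h x - (a x)^2) * b x + a x * (- h x - (b x)^2))) (at x)"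
      by (rule DERIV_cong[OF DERIV_mult[OF DERIV_add[OF ad bd]
            DERIV_add[OF h_diff DERIV_mult[OF ad bd]]]])
         (simp add: algebra_simps)
lemma div_deriv:
  fixes N \<Phi> d\<Phi> :: "real \<Rightarrow> real"
  assumes n: "(N has_real_derivative N' ) (at x)"
   and pd: "(\<Phi> has_real_derivative d\<Phi> x) (at x)" and P0: "\<Phi> x \<noteq> 0"
  shows "((\<lambda>x. N x / (2 * \<Phi> x)) has_real_derivative N' / (2 * \<Phi> x) - N x * d\<Phi> x / (2 * \<Phi> x * \<Phi> x)) (at x)"
proof -
    have dd: "((\<lambda>x. 2 * \<Phi> x) has_real_derivative 2 * d\<Phi> x) (at x)"
      using DERIV_cmult[OF pd, of 2] by simp
    have gen: "(A * (2 * P) - B * (2 * d)) / ((2 * P) * (2 * P)) = A / (2 * P) - B * d / (2 * P * P)"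
      if "P \<noteq> 0" for A B d P :: real using that by (simp add: field_simps)
    show ?thesis
      apply (rule DERIV_cong[OF DERIV_divide[OF n dd]])
      using P0 apply simp
      by (rule gen[OF P0])
qed
lemma tb_alg:
  fixes a b h P dP S :: real
  assumes P: "P > 0" "P^2 = -(a*b)" and D: "h - P^2 \<noteq> 0"
    and dP: "dP = (a + b)*(h + a*b)/(2*P)" and S: "S = \<bar>(h - P^2)*(a - b)\<bar>/(2*P)"
  shows "((h - P^2)*(a - b) > 0 \<longrightarrow> P*(dP - S)/(h - P^2) = b \<and> P*(dP + S)/(h - P^2) = a)
       \<and> ((h - P^2)*(a - b) < 0 \<longrightarrow> P*(dP - S)/(h - P^2) = a \<and> P*(dP + S)/(h - P^2) = b)"
proof -
  have hh: "h + a*b = h - P^2" using P by simp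
  have dP': "dP = (a + b)*(h - P^2)/(2*P)" using dP hh by simp
  have P0: "P \<noteq> 0" using P by simp
  show ?thesis
  proof (intro conjI impI)
    assume pos: "(h - P^2)*(a - b) > 0"
    then have S': "S = (h - P^2)*(a - b)/(2*P)" using S by simp
    show "P*(dP - S)/(h - P^2) = b" unfolding dP' S' using P0 D by (simp add: field_simps)
    show "P*(dP + S)/(h - P^2) = a" unfolding dP' S' using P0 D by (simp add: field_simps)
  next
    assume neg: "(h - P^2)*(a - b) < 0"
    then have S': "S = - ((h - P^2)*(a - b))/(2*P)" using S by simp
    show "P*(dP - S)/(h - P^2) = a" unfolding dP' S' using P0 D by (simp add: field_simps)
    show "P*(dP + S)/(h - P^2) = b" unfolding dP' S' using P0 D by (simp add: field_simps)
  qed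
qed
theorem proposition2p13:
  fixes h h' u1 u1' u2 u2' :: "real \<Rightarrow> real" and I :: "real set" and x0 :: real
  assumes h_diff: "\<And>x. (h has_real_derivative h' x) (at x)"
    and h'_cont: "continuous_on UNIV h'"
    and I_open: "open I" and I_interval: "is_interval I" and x0_in: "x0 \<in> I"
    and u1_d: "\<And>x. (u1 has_real_derivative u1' x) (at x)"
    and u1'_d: "\<And>x. (u1' has_real_derivative - (h x * u1 x)) (at x)"
    and u2_d: "\<And>x. (u2 has_real_derivative u2' x) (at x)"
    and u2'_d: "\<And>x. (u2' has_real_derivative - (h x * u2 x)) (at x)"
    and lin_indep: "\<And>c1 c2. (\<forall>x. c1 * u1 x + c2 * u2 x = 0) \<Longrightarrow> c1 = 0 \<and> c2 = 0"
    and u1_nz: "\<And>x. x \<in> I \<Longrightarrow> u1 x \<noteq> 0"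
    and u2_nz: "\<And>x. x \<in> I \<Longrightarrow> u2 x \<noteq> 0"
    and neg: "\<And>x. x \<in> I \<Longrightarrow> (u1' x * u2' x) / (u1 x * u2 x) < 0"
    and \<Phi>_def: "\<Phi> = (\<lambda>x. sqrt (- (u1' x * u2' x) / (u1 x * u2 x)))"
    and off_singular: "\<And>x. x \<in> I \<Longrightarrow> (\<Phi> x)\<^sup>2 \<noteq> h x"
  shows "(\<exists>d\<Phi> dd\<Phi>. \<forall>x\<in>I.
            (\<Phi> has_real_derivative d\<Phi> x) (at x) \<and>
            (d\<Phi> has_real_derivative dd\<Phi> x) (at x) \<and>
            dd\<Phi> x = (3 * (\<Phi> x)\<^sup>2 + h x) / ((\<Phi> x)\<^sup>2 - h x) * (d\<Phi> x)\<^sup>2 / \<Phi> x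
                     - h' x * d\<Phi> x / ((\<Phi> x)\<^sup>2 - h x)
                     + ((\<Phi> x) ^ 4 - (h x)\<^sup>2) / \<Phi> x)
         \<and> ((\<forall>x\<in>I. u1 x = u1 x0 * u_top h \<Phi> x0 x \<and> u2 x = u2 x0 * u_bot h \<Phi> x0 x)
            \<or> (\<forall>x\<in>I. u1 x = u1 x0 * u_bot h \<Phi> x0 x \<and> u2 x = u2 x0 * u_top h \<Phi> x0 x))"
proof -
  define a where "a = (\<lambda>x. u1' x / u1 x)"
  define b where "b = (\<lambda>x. u2' x / u2 x)"
  have \<Phi>_eq: "\<Phi> = (\<lambda>x. sqrt (- (a x * b x)))"
    unfolding \<Phi>_def a_def b_def by (rule ext) (metis minus_divide_left times_divide_times_eq)
  have ab_neg: "a x * b x < 0" if "x \<in> I" for x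
    using neg[OF that] unfolding a_def b_def by simp
  have P_pos: "\<Phi> x > 0" if "x \<in> I" for x
    using ab_neg[OF that] unfolding \<Phi>_eq by simp
  have P_sq: "(\<Phi> x)^2 = - (a x * b x)" if "x \<in> I" for x
    using ab_neg[OF that] unfolding \<Phi>_eq by simp
  have a_der: "(a has_real_derivative (- h x - (a x)^2)) (at x)" if "x \<in> I" for x
    unfolding a_def
    by (rule DERIV_cong[OF DERIV_divide[OF u1'_d u1_d u1_nz[OF that]]])
       (use u1_nz[OF that] in \<open>simp add: field_simps power2_eq_square\<close>)
  have b_der: "(b has_real_derivative (- h x - (b x)^2)) (at x)" if "x \<in> I" for x
    unfolding b_def
    by (rule DERIV_cong[OF DERIV_divide[OF u2'_d u2_d u2_nz[OF that]]])
       (use u2_nz[OF that] in \<open>simp add: field_simps power2_eq_square\<close>)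
  define d\<Phi> where "d\<Phi> = (\<lambda>x. (a x + b x) * (h x + a x * b x) / (2 * \<Phi> x))"
  define dd\<Phi> where "dd\<Phi> = (\<lambda>x. (((- h x - (a x)^2) + (- h x - (b x)^2)) * (h x + a x * b x)
      + (a x + b x) * (h' x + (- h x - (a x)^2) * b x + a x * (- h x - (b x)^2))) / (2 * \<Phi> x)
      - (a x + b x) * (h x + a x * b x) * d\<Phi> x / (2 * \<Phi> x * \<Phi> x))"
  have \<Phi>_der: "(\<Phi> has_real_derivative d\<Phi> x) (at x)" if x: "x \<in> I" for x
    using sqrt_deriv[where a=a and b=b and h=h and x=x, OF a_der[OF x] b_der[OF x] ab_neg[OF x]] unfolding d\<Phi>_def \<Phi>_eq .
  have d\<Phi>_der: "(d\<Phi> has_real_derivative dd\<Phi> x) (at x)" if x: "x \<in> I" for x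
  proof -
    have P0: "\<Phi> x \<noteq> 0" using P_pos[OF x] by simp
    have "((\<lambda>x. (a x + b x) * (h x + a x * b x) / (2 * \<Phi> x)) has_real_derivative dd\<Phi> x) (at x)"
      unfolding dd\<Phi>_def
      by (rule div_deriv[where \<Phi>=\<Phi> and x=x and d\<Phi>=d\<Phi> and N="\<lambda>x. (a x + b x) * (h x + a x * b x)", OF N_deriv[where a=a and b=b and h=h and x=x, OF a_der[OF x] b_der[OF x] h_diff] \<Phi>_der[OF x] P0])
    then show ?thesis unfolding d\<Phi>_def .
  qed
  have part1: "\<forall>x\<in>I.
            (\<Phi> has_real_derivative d\<Phi> x) (at x) \<and>
            (d\<Phi> has_real_derivative dd\<Phi> x) (at x) \<and>
            dd\<Phi> x = (3 * (\<Phi> x)\<^sup>2 + h x) / ((\<Phi> x)\<^sup>2 - h x) * (d\<Phi> x)\<^sup>2 / \<Phi> x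
                     - h' x * d\<Phi> x / ((\<Phi> x)\<^sup>2 - h x)
                     + ((\<Phi> x) ^ 4 - (h x)\<^sup>2) / \<Phi> x"
  proof
    fix x assume x: "x \<in> I"
    show "(\<Phi> has_real_derivative d\<Phi> x) (at x) \<and>
            (d\<Phi> has_real_derivative dd\<Phi> x) (at x) \<and>
            dd\<Phi> x = (3 * (\<Phi> x)\<^sup>2 + h x) / ((\<Phi> x)\<^sup>2 - h x) * (d\<Phi> x)\<^sup>2 / \<Phi> x
                     - h' x * d\<Phi> x / ((\<Phi> x)\<^sup>2 - h x)
                     + ((\<Phi> x) ^ 4 - (h x)\<^sup>2) / \<Phi> x"
      using \<Phi>_der[OF x] d\<Phi>_der[OF x]
        ode_alg[OF P_pos[OF x] P_sq[OF x] off_singular[OF x], of "h' x"]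
      unfolding dd\<Phi>_def d\<Phi>_def by simp
  qed
  have contI: "continuous_on I f" if "\<And>x. x \<in> I \<Longrightarrow> (f has_real_derivative f' x) (at x)" for f f'
    using that by (meson DERIV_continuous continuous_at_imp_continuous_on)
  have hc: "continuous_on UNIV h" using h_diff by (meson DERIV_continuous continuous_at_imp_continuous_on)
  have \<Phi>c: "continuous_on I \<Phi>" by (rule contI[OF \<Phi>_der])
  have ac: "continuous_on I a" by (rule contI[OF a_der])
  have bc: "continuous_on I b" by (rule contI[OF b_der])
  have u1'c: "continuous_on UNIV u1'" using u1'_d by (meson DERIV_continuous continuous_at_imp_continuous_on)
  have u2'c: "continuous_on UNIV u2'" using u2'_d by (meson DERIV_continuous continuous_at_imp_continuous_on)
  define D where "D = (\<lambda>x. h x - (\<Phi> x)^2)"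
  have Dnz: "D x \<noteq> 0" if "x \<in> I" for x using off_singular[OF that] unfolding D_def by simp
  have abnz: "a x - b x \<noteq> 0" if "x \<in> I" for x
  proof
    assume "a x - b x = 0"
    then have "a x * b x = (a x)^2" by (simp add: power2_eq_square)
    then show False using ab_neg[OF that] by (metis not_less zero_le_power2)
  qed
  have Dc: "continuous_on I (\<lambda>x. D x * (a x - b x))"
    unfolding D_def using hc \<Phi>c ac bc
    by (auto intro!: continuous_intros intro: continuous_on_subset)
  have sc: "(\<forall>x\<in>I. D x * (a x - b x) > 0) \<or> (\<forall>x\<in>I. D x * (a x - b x) < 0)"
    by (rule sign_const[OF I_interval Dc]) (use Dnz abnz in auto)
  have tb: "(D x * (a x - b x) > 0 \<longrightarrow>
       \<Phi> x * (deriv \<Phi> x - sqrt ((h x - (\<Phi> x)\<^sup>2)\<^sup>2 + (deriv \<Phi> x)\<^sup>2)) / (h x - (\<Phi> x)\<^sup>2) = b x \<and>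
       \<Phi> x * (deriv \<Phi> x + sqrt ((h x - (\<Phi> x)\<^sup>2)\<^sup>2 + (deriv \<Phi> x)\<^sup>2)) / (h x - (\<Phi> x)\<^sup>2) = a x)
     \<and> (D x * (a x - b x) < 0 \<longrightarrow>
       \<Phi> x * (deriv \<Phi> x - sqrt ((h x - (\<Phi> x)\<^sup>2)\<^sup>2 + (deriv \<Phi> x)\<^sup>2)) / (h x - (\<Phi> x)\<^sup>2) = a x \<and>
       \<Phi> x * (deriv \<Phi> x + sqrt ((h x - (\<Phi> x)\<^sup>2)\<^sup>2 + (deriv \<Phi> x)\<^sup>2)) / (h x - (\<Phi> x)\<^sup>2) = b x)"
    if x: "x \<in> I" for x
  proof -
    have dd: "deriv \<Phi> x = d\<Phi> x" by (rule DERIV_imp_deriv[OF \<Phi>_der[OF x]])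
    have D': "h x - (\<Phi> x)^2 \<noteq> 0" using Dnz[OF x] unfolding D_def .
    have dP: "deriv \<Phi> x = (a x + b x) * (h x + a x * b x) / (2 * \<Phi> x)" unfolding dd d\<Phi>_def ..
    have S: "sqrt ((h x - (\<Phi> x)\<^sup>2)\<^sup>2 + (deriv \<Phi> x)\<^sup>2) = \<bar>(h x - (\<Phi> x)^2) * (a x - b x)\<bar> / (2 * \<Phi> x)"
      by (rule top_bot_alg[OF P_pos[OF x] P_sq[OF x] D' dP])
    show ?thesis using tb_alg[OF P_pos[OF x] P_sq[OF x] D' dP S] unfolding D_def .
  qed
  have tneg: "\<Phi> y * (deriv \<Phi> y - sqrt ((h y - (\<Phi> y)\<^sup>2)\<^sup>2 + (deriv \<Phi> y)\<^sup>2)) / (h y - (\<Phi> y)\<^sup>2) = u1' y / u1 y \<and> \<Phi> y * (deriv \<Phi> y + sqrt ((h y - (\<Phi> y)\<^sup>2)\<^sup>2 + (deriv \<Phi> y)\<^sup>2)) / (h y - (\<Phi> y)\<^sup>2) = u2' y / u2 y" if "\<forall>x\<in>I. D x * (a x - b x) < 0" "y \<in> I" for y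
    using tb[OF that(2)] that unfolding a_def b_def by blast
  have tpos: "\<Phi> y * (deriv \<Phi> y - sqrt ((h y - (\<Phi> y)\<^sup>2)\<^sup>2 + (deriv \<Phi> y)\<^sup>2)) / (h y - (\<Phi> y)\<^sup>2) = u2' y / u2 y \<and> \<Phi> y * (deriv \<Phi> y + sqrt ((h y - (\<Phi> y)\<^sup>2)\<^sup>2 + (deriv \<Phi> y)\<^sup>2)) / (h y - (\<Phi> y)\<^sup>2) = u1' y / u1 y" if "\<forall>x\<in>I. D x * (a x - b x) > 0" "y \<in> I" for y
    using tb[OF that(2)] that unfolding a_def b_def by blast
  have u1_top: "u1 x = u1 x0 * u_top h \<Phi> x0 x" and u2_bot: "u2 x = u2 x0 * u_bot h \<Phi> x0 x"
    if neg': "\<forall>x\<in>I. D x * (a x - b x) < 0" and x: "x \<in> I" for x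
  proof -
    show "u1 x = u1 x0 * u_top h \<Phi> x0 x" unfolding u_top_def
      apply (rule u_rep[OF I_interval x0_in x u1_nz u1_d u1'c])
       apply simp
      using tneg[OF neg'] by blast
    show "u2 x = u2 x0 * u_bot h \<Phi> x0 x" unfolding u_bot_def
      apply (rule u_rep[OF I_interval x0_in x u2_nz u2_d u2'c])
       apply simp
      using tneg[OF neg'] by blast
  qed
  have u1_bot: "u1 x = u1 x0 * u_bot h \<Phi> x0 x" and u2_top: "u2 x = u2 x0 * u_top h \<Phi> x0 x"
    if pos': "\<forall>x\<in>I. D x * (a x - b x) > 0" and x: "x \<in> I" for x
  proof -
    show "u1 x = u1 x0 * u_bot h \<Phi> x0 x" unfolding u_bot_def
      apply (rule u_rep[OF I_interval x0_in x u1_nz u1_d u1'c])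
       apply simp
      using tpos[OF pos'] by blast
    show "u2 x = u2 x0 * u_top h \<Phi> x0 x" unfolding u_top_def
      apply (rule u_rep[OF I_interval x0_in x u2_nz u2_d u2'c])
       apply simp
      using tpos[OF pos'] by blast
  qed
  show ?thesis
    using part1 sc u1_top u2_bot u1_bot u2_top by blast
qed


end
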